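(* In the setting below, suppose that $x\mapsto f(x)+g(Ax)$ is bounded below and $\{x: x\in\operatorname{ri}(\operatorname{dom}f),\ Ax\in\operatorname{ri}(\operatorname{dom}g),\ Bx=b\}\ne\emptyset$ ("$\operatorname{ri}$" omitted for polyhedral $f$ or $g$). Let $w^*=[y^*;z^*]$ be a local minimizer of $\Xi(w)+\Psi_{0,\mu}(z)$ (for some $\mu>0$), let $T_*=\{i:z^*_i\ne0\}$, $\bar T_*=[r]\setminus T_*$, let $$\Omega_0:=\operatorname{argmin}_{w=[y;z]}\{\Xi(w):\ z_{\bar T_*}=0\},$$ and assume $w^*\in\operatorname{argmin}\{\|z\|_0:\ w=[y;z]\in\Omega_0\}$. Define $\xi_0:=\min_w\{\Xi(w): z_{\bar T_*}=0\}$, $\xi_1:=\min_{S\subsetneq T_*}\min_w\{\Xi(w): z_{\bar S}=0\}$, $\xi_2:=\min_{S\not\subseteq T_*}\min_w\{\Xi(w): z_{\bar S}=0\}$ (a minimum over an empty family of index sets being $+\infty$). If $\mu'\in\mathbb R^r$, $\mu'>0$, satisfies $\sum_{i\in T_*}\mu'_i\le\xi_1-\xi_0$ and $\mu'_j>\max\{\xi_1-\xi_2,0\}$ for all $j\in\bar T_*$, then $w^*$ is a global minimizer of $\Xi(w)+\Psi_{0,\mu'}(z)$.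
   Context: Let $f:\mathbb R^n\to(-\infty,\infty]$, $g:\mathbb R^m\to(-\infty,\infty]$ be proper, lsc and convex with conjugates $f^*,g^*$; $A\in\mathbb R^{m\times n}$, $B\in\mathbb R^{r\times n}$, $b\in\mathbb R^r$. For $w=[y;z]\in\mathbb R^m\times\mathbb R^r$, $\Xi(w)=f^*(-A^\top y-B^\top z)+g^*(y)+\langle b,z\rangle$; $\Psi_{0,\mu}(z)=\sum_{i=1}^r\mu_i\mathbf 1_{\{z_i\ne0\}}$. $\|z\|_0$ is the number of nonzero entries of $z$; $[r]=\{1,\dots,r\}$, $\bar S=[r]\setminus S$, $z_S$ the subvector indexed by $S$. $\operatorname{ri}$ denotes relative interior. *)

theory Defs
  imports "HOL-Analysis.Analysis" "HOL-Library.Extended_Real"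
begin

definition edom :: "('a \<Rightarrow> ereal) \<Rightarrow> 'a set" where
  "edom f = {x. f x < \<infinity>}"

definition epigraph :: "('a \<Rightarrow> ereal) \<Rightarrow> ('a \<times> real) set" where
  "epigraph f = {(x, t). f x \<le> ereal t}"

definition proper_fun :: "('a \<Rightarrow> ereal) \<Rightarrow> bool" where
  "proper_fun f \<longleftrightarrow> (\<forall>x. f x \<noteq> -\<infinity>) \<and> (\<exists>x. f x < \<infinity>)"

definition lsc_fun :: "('a::topological_space \<Rightarrow> ereal) \<Rightarrow> bool" where
  "lsc_fun f \<longleftrightarrow> (\<forall>x. f x \<le> Liminf (at x) f)"

definition convex_fun :: "('a::real_vector \<Rightarrow> ereal) \<Rightarrow> bool" where
  "convex_fun f \<longleftrightarrow> convex (epigraph f)"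

definition polyhedral_fun :: "('a::euclidean_space \<Rightarrow> ereal) \<Rightarrow> bool" where
  "polyhedral_fun f \<longleftrightarrow> polyhedron (epigraph f)"

definition conj_fun :: "('a::real_inner \<Rightarrow> ereal) \<Rightarrow> 'a \<Rightarrow> ereal" where
  "conj_fun f u = (SUP x. ereal (u \<bullet> x) - f x)"

definition Xi :: "(real^'n \<Rightarrow> ereal) \<Rightarrow> (real^'m \<Rightarrow> ereal) \<Rightarrow> real^'n^'m \<Rightarrow> real^'n^'r
     \<Rightarrow> real^'r \<Rightarrow> (real^'m) \<times> (real^'r) \<Rightarrow> ereal" where
  "Xi f g A B b w = conj_fun f (- (transpose A *v fst w) - (transpose B *v snd w))
                    + conj_fun g (fst w) + ereal (b \<bullet> snd w)"

definition Psi0 :: "real^'r \<Rightarrow> real^'r \<Rightarrow> real" where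
  "Psi0 \<mu> z = (\<Sum>i\<in>UNIV. if z $ i \<noteq> 0 then \<mu> $ i else 0)"

definition l0norm :: "real^'r \<Rightarrow> nat" where
  "l0norm z = card {i. z $ i \<noteq> 0}"

definition supp :: "real^'r \<Rightarrow> 'r set" where
  "supp z = {i. z $ i \<noteq> 0}"

definition restricted_inf :: "((real^'m) \<times> (real^'r) \<Rightarrow> ereal) \<Rightarrow> 'r set \<Rightarrow> ereal" where
  "restricted_inf F S = (INF w \<in> {w. \<forall>i. i \<notin> S \<longrightarrow> snd w $ i = 0}. F w)"

definition local_minimizer :: "('a::metric_space \<Rightarrow> ereal) \<Rightarrow> 'a \<Rightarrow> bool" where
  "local_minimizer F x \<longleftrightarrow> (\<exists>e>0. \<forall>y. dist y x < e \<longrightarrow> F x \<le> F y)"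

definition global_minimizer :: "('a \<Rightarrow> ereal) \<Rightarrow> 'a \<Rightarrow> bool" where
  "global_minimizer F x \<longleftrightarrow> (\<forall>y. F x \<le> F y)"

definition argmin_on :: "('a \<Rightarrow> 'b::linorder) \<Rightarrow> 'a set \<Rightarrow> 'a set" where
  "argmin_on F C = {x \<in> C. \<forall>y\<in>C. F x \<le> F y}"

end

theory Submission
  imports Defs
begin

lemma Psi0_supp: "Psi0 (m::real^'r) z = (\<Sum>i\<in>supp z. m $ i)"
  unfolding Psi0_def supp_def by (simp add: sum.If_cases)

lemma ri_le:
  assumes "\<forall>i. i \<notin> S \<longrightarrow> snd w $ i = 0"
  shows "restricted_inf F S \<le> F w"
  unfolding restricted_inf_def by (rule INF_lower) (use assms in auto)

theorem mainTheorem19: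
  fixes f :: "real^'n \<Rightarrow> ereal" and g :: "real^'m \<Rightarrow> ereal"
    and A :: "real^'n^'m" and B :: "real^'n^'r" and b :: "real^'r"
    and \<mu> \<mu>' :: "real^'r" and ystar :: "real^'m" and zstar :: "real^'r"
  assumes f_pr: "proper_fun f" and f_lsc: "lsc_fun f" and f_cvx: "convex_fun f"
    and g_pr: "proper_fun g" and g_lsc: "lsc_fun g" and g_cvx: "convex_fun g"
    and bdd: "\<exists>c::real. \<forall>x. ereal c \<le> f x + g (A *v x)"
    and CQ: "\<exists>x. (x \<in> rel_interior (edom f) \<or> (polyhedral_fun f \<and> x \<in> edom f))
                \<and> (A *v x \<in> rel_interior (edom g) \<or> (polyhedral_fun g \<and> A *v x \<in> edom g))
                \<and> B *v x = b"
    and mu_pos: "\<forall>i. \<mu> $ i > 0"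
    and locmin: "local_minimizer (\<lambda>w. Xi f g A B b w + ereal (Psi0 \<mu> (snd w))) (ystar, zstar)"
    and l0min: "(ystar, zstar) \<in> argmin_on (\<lambda>w. l0norm (snd w))
                  (argmin_on (Xi f g A B b) {w. \<forall>i. i \<notin> supp zstar \<longrightarrow> snd w $ i = 0})"
    and mu'_pos: "\<forall>i. \<mu>' $ i > 0"
    and h1: "ereal (\<Sum>i\<in>supp zstar. \<mu>' $ i) \<le>
               (INF S \<in> {S. S \<subset> supp zstar}. restricted_inf (Xi f g A B b) S)
               - restricted_inf (Xi f g A B b) (supp zstar)"
    and h2: "\<forall>j. j \<notin> supp zstar \<longrightarrow>
               ((INF S \<in> {S. \<not> S \<subseteq> supp zstar}. restricted_inf (Xi f g A B b) S) \<noteq> \<infinity>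
                 \<longrightarrow> (INF S \<in> {S. S \<subset> supp zstar}. restricted_inf (Xi f g A B b) S)
                     - (INF S \<in> {S. \<not> S \<subseteq> supp zstar}. restricted_inf (Xi f g A B b) S)
                     < ereal (\<mu>' $ j))"
  shows "global_minimizer (\<lambda>w. Xi f g A B b w + ereal (Psi0 \<mu>' (snd w))) (ystar, zstar)"
proof -
  let ?X = "Xi f g A B b"
  let ?T = "supp zstar"
  define x0 where "x0 = restricted_inf ?X ?T"
  define x1 where "x1 = (INF S \<in> {S. S \<subset> ?T}. restricted_inf ?X S)"
  define x2 where "x2 = (INF S \<in> {S. \<not> S \<subseteq> ?T}. restricted_inf ?X S)"
  define s where "s = (\<Sum>i\<in>?T. \<mu>' $ i)"
  have feas: "\<forall>i. i \<notin> ?T \<longrightarrow> snd (ystar, zstar) $ i = 0" by (simp add: supp_def)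
  have amin: "\<And>w. \<forall>i. i \<notin> ?T \<longrightarrow> snd w $ i = 0 \<Longrightarrow> ?X (ystar, zstar) \<le> ?X w"
    using l0min unfolding argmin_on_def by auto
  have x0eq: "x0 = ?X (ystar, zstar)"
  proof (rule antisym)
    show "x0 \<le> ?X (ystar, zstar)" unfolding x0_def by (rule ri_le[OF feas])
    show "?X (ystar, zstar) \<le> x0" unfolding x0_def restricted_inf_def
      by (rule INF_greatest) (use amin in auto)
  qed
  have x01: "x0 \<le> x1" unfolding x1_def
  proof (rule INF_greatest)
    fix S assume "S \<in> {S. S \<subset> ?T}"
    then have "S \<subseteq> ?T" by auto
    then show "x0 \<le> restricted_inf ?X S" unfolding x0_def restricted_inf_def
      by (intro INF_greatest INF_lower) auto
  qed
  have h1': "ereal s \<le> x1 - x0" using h1 unfolding s_def x1_def x0_def .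
  have Fstar: "?X (ystar, zstar) + ereal (Psi0 \<mu>' zstar) = x0 + ereal s"
    by (simp add: x0eq Psi0_supp s_def)
  have Fx1: "x0 + ereal s \<le> x1"
  proof (cases x0)
    case (real r)
    then show ?thesis using h1' by (cases x1) auto
  next
    case PInf
    then show ?thesis using x01 by auto
  next
    case MInf
    then show ?thesis by auto
  qed
  have psi_nn: "\<And>z. 0 \<le> Psi0 \<mu>' z" unfolding Psi0_def
    using mu'_pos by (intro sum_nonneg) (auto intro: less_imp_le)
  show ?thesis unfolding global_minimizer_def
  proof
    fix w :: "(real^'m) \<times> (real^'r)"
    let ?S = "supp (snd w)"
    have wf: "\<forall>i. i \<notin> ?S \<longrightarrow> snd w $ i = 0" by (simp add: supp_def)
    have Xw: "restricted_inf ?X ?S \<le> ?X w" by (rule ri_le[OF wf])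
    have ge: "?X w \<le> ?X w + ereal (Psi0 \<mu>' (snd w))"
      using psi_nn[of "snd w"] by (simp add: ereal_le_add_self)
    show "?X (ystar, zstar) + ereal (Psi0 \<mu>' (snd (ystar, zstar))) \<le> ?X w + ereal (Psi0 \<mu>' (snd w))"
    proof (cases "?S \<subseteq> ?T")
      case True
      show ?thesis
      proof (cases "?S = ?T")
        case True
        have "?X (ystar, zstar) \<le> ?X w" using amin wf True by auto
        then show ?thesis using True by (simp add: Psi0_supp add_right_mono)
      next
        case False
        with \<open>?S \<subseteq> ?T\<close> have "x1 \<le> restricted_inf ?X ?S" unfolding x1_def
          by (intro INF_lower) auto
        then have "x1 \<le> ?X w + ereal (Psi0 \<mu>' (snd w))" using Xw ge by order
        then show ?thesis using Fstar Fx1 by simp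
      qed
    next
      case False
      then obtain j where j: "j \<in> ?S" "j \<notin> ?T" by auto
      have "x2 \<le> restricted_inf ?X ?S" unfolding x2_def using False by (intro INF_lower) auto
      then have x2w: "x2 \<le> ?X w" using Xw by order
      have pj: "\<mu>' $ j \<le> Psi0 \<mu>' (snd w)" unfolding Psi0_supp
        using j mu'_pos by (intro member_le_sum) (auto intro: less_imp_le)
      show ?thesis
      proof (cases "x2 = \<infinity>")
        case True
        then show ?thesis using x2w by simp
      next
        case False
        then have lt: "x1 - x2 < ereal (\<mu>' $ j)" using h2 j unfolding x1_def x2_def by blast
        have "x1 \<le> x2 + ereal (\<mu>' $ j)"
        proof (cases x2)
          case (real r) then show ?thesis using lt by (cases x1) auto
        next
          case PInf then show ?thesis using False by simp
        next
          case MInf then show ?thesis using lt by (cases x1) auto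
        qed
        also have "\<dots> \<le> ?X w + ereal (Psi0 \<mu>' (snd w))"
          using x2w pj by (intro add_mono) auto
        finally show ?thesis using Fstar Fx1 by simp
      qed
    qed
  qed
qed

end
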